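(* Let $\alpha>-1$, $d\in\widetilde{D}$, $p=(L_n^{(\alpha+1)})_{n\in\mathbb{N}_0}$, $q=(L_n^{(\alpha)})_{n\in\mathbb{N}_0}$, and let $T=E_{p,d}$ be regarded as an operator in $H(q)$ with domain $\mathcal{P}_c$. Suppose $f=\sum_kf_kq_k$ and $g=\sum_kg_kq_k$ in $H(q)$ are such that $(f,g)$ lies in the closure of the graph $G(T)$ in $H(q)\times H(q)$. Then: (a) there exists an array $(h_{n,u})_{n,u\in\mathbb{N}_0}$ of complex numbers such that (a1) $h_{n,u}=0$ for all $u>n$; (a2) $\lim_{n\to\infty}h_{n,u}=f_u$ for each $u\in\mathbb{N}_0$; (a3) $\lim_{n\to\infty}h_{n,n}d_n=0$; (a4) $\lim_{n\to\infty}\sum_{u=1}^nh_{n,u}(d_u-d_{u-1})=g_0-f_0d_0$; (b) for every $k\in\mathbb{N}$, $g_k=g_0-f_0d_0+f_kd_k-\sum_{u=1}^kf_u(d_u-d_{u-1})$.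
   Context: $\mathcal{P}_c$ is the space of polynomials in one real variable with complex coefficients. For $\beta>-1$, $L_n^{(\beta)}(x)=\sum_{k=0}^n\frac{(-1)^k}{k!}\binom{n+\beta}{n-k}x^k$ is the generalized Laguerre polynomial. For a sequence $Q=(Q_n)$ of polynomials with $\deg Q_n=n$, $H(Q)$ is the completion of $\mathcal{P}_c$ with respect to the inner product making $(Q_n)$ orthonormal; $g\in H(Q)$ is written $g=\sum_kg_kQ_k$, $(g_k)\in\ell_2$. $\widetilde{D}$ is the set of non-constant sequences of non-zero complex numbers. For a polynomial sequence $p$ and $d\in\widetilde{D}$, $E_{p,d}$ is the linear map on $\mathcal{P}_c$ with $E_{p,d}(p_n)=d_np_n$. *)

theory Defs
  imports "HOL-Analysis.Analysis" "HOL-Computational_Algebra.Polynomial"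
begin

definition laguerre :: "real \<Rightarrow> nat \<Rightarrow> complex poly" where
  "laguerre \<beta> n = (\<Sum>k\<le>n. monom (complex_of_real ((-1) ^ k / fact k * ((real n + \<beta>) gchoose (n - k)))) k)"

definition poly_coords :: "(nat \<Rightarrow> complex poly) \<Rightarrow> complex poly \<Rightarrow> nat \<Rightarrow> complex" where
  "poly_coords Q P = (THE c. (\<forall>n > degree P. c n = 0) \<and> P = (\<Sum>n\<le>degree P. smult (c n) (Q n)))"

definition E_op :: "(nat \<Rightarrow> complex poly) \<Rightarrow> (nat \<Rightarrow> complex) \<Rightarrow> complex poly \<Rightarrow> complex poly" where
  "E_op p d P = (\<Sum>n\<le>degree P. smult (d n * poly_coords p P n) (p n))"

definition D_tilde :: "(nat \<Rightarrow> complex) set" where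
  "D_tilde = {d. (\<forall>n. d n \<noteq> 0) \<and> (\<exists>m n. d m \<noteq> d n)}"

text \<open>Elements of H(Q) are identified with their coefficient sequences in ell_2.\<close>
definition ell2 :: "(nat \<Rightarrow> complex) \<Rightarrow> bool" where
  "ell2 f \<longleftrightarrow> summable (\<lambda>k. (cmod (f k))\<^sup>2)"

definition dist_H :: "(nat \<Rightarrow> complex poly) \<Rightarrow> (nat \<Rightarrow> complex) \<Rightarrow> complex poly \<Rightarrow> real" where
  "dist_H Q f P = sqrt (\<Sum>k. (cmod (f k - poly_coords Q P k))\<^sup>2)"

definition in_graph_closure ::
  "(nat \<Rightarrow> complex poly) \<Rightarrow> (complex poly \<Rightarrow> complex poly) \<Rightarrow> (nat \<Rightarrow> complex) \<Rightarrow> (nat \<Rightarrow> complex) \<Rightarrow> bool" where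
  "in_graph_closure Q T f g \<longleftrightarrow>
     (\<exists>P :: nat \<Rightarrow> complex poly. (\<lambda>j. dist_H Q f (P j)) \<longlonglongrightarrow> 0 \<and> (\<lambda>j. dist_H Q g (T (P j))) \<longlonglongrightarrow> 0)"

end

theory Submission
  imports Defs
begin

lemma coeff_top:
  fixes Q :: "nat \<Rightarrow> complex poly"
  assumes deg: "\<And>n. degree (Q n) = n" and nz: "\<And>n. Q n \<noteq> 0"
    and cm: "c m \<noteq> 0" and above: "\<forall>n. m < n \<and> n \<le> N \<longrightarrow> c n = 0" and mN: "m \<le> N"
  shows "coeff (\<Sum>n\<le>N. smult (c n) (Q n)) m \<noteq> 0"
proof -
  have "coeff (\<Sum>n\<le>N. smult (c n) (Q n)) m = (\<Sum>n\<le>N. c n * coeff (Q n) m)"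
    by (simp add: coeff_sum)
  also have "\<dots> = (\<Sum>n\<le>N. if n = m then c m * coeff (Q m) m else 0)"
  proof (rule sum.cong)
    fix n assume "n \<in> {..N}"
    show "c n * coeff (Q n) m = (if n = m then c m * coeff (Q m) m else 0)"
    proof (cases "n < m")
      case True then have "coeff (Q n) m = 0" using deg by (simp add: coeff_eq_0)
      then show ?thesis using True by simp
    next
      case False then show ?thesis using above \<open>n \<in> {..N}\<close> by auto
    qed
  qed simp
  also have "\<dots> = c m * coeff (Q m) m" using mN by simp
  also have "\<dots> \<noteq> 0" proof -
    have "coeff (Q m) m \<noteq> 0" using nz[of m] deg[of m] by (metis leading_coeff_0_iff)
    then show ?thesis using cm by simp
  qed
  finally show ?thesis .
qed

lemma max_nz:
  assumes "c n \<noteq> 0" "n \<le> (N::nat)"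
  shows "\<exists>m. c m \<noteq> 0 \<and> n \<le> m \<and> m \<le> N \<and> (\<forall>k. m < k \<and> k \<le> N \<longrightarrow> c k = 0)"
proof -
  let ?S = "{k. k \<le> N \<and> c k \<noteq> 0}"
  have fin: "finite ?S" by (rule finite_subset[of _ "{..N}"]) auto
  have nS: "n \<in> ?S" using assms by simp
  let ?m = "Max ?S"
  have "?m \<in> ?S" using fin nS by (intro Max_in) auto
  moreover have "n \<le> ?m" using fin nS by simp
  moreover have "\<forall>k. ?m < k \<and> k \<le> N \<longrightarrow> c k = 0"
  proof (intro allI impI)
    fix k assume k: "?m < k \<and> k \<le> N"
    show "c k = 0"
    proof (rule ccontr)
      assume "c k \<noteq> 0"
      then have "k \<in> ?S" using k by simp
      then have "k \<le> ?m" using fin by simp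
      then show False using k by simp
    qed
  qed
  ultimately show ?thesis by blast
qed

lemma indep:
  fixes Q :: "nat \<Rightarrow> complex poly"
  assumes deg: "\<And>n. degree (Q n) = n" and nz: "\<And>n. Q n \<noteq> 0"
    and s: "(\<Sum>n\<le>N. smult (c n) (Q n)) = 0" and n: "n \<le> N"
  shows "c n = 0"
proof (rule ccontr)
  assume "c n \<noteq> 0"
  then obtain m where m: "c m \<noteq> 0" "n \<le> m" "m \<le> N" "\<forall>k. m < k \<and> k \<le> N \<longrightarrow> c k = 0"
    using max_nz[of c n N] n by blast
  have "coeff (\<Sum>n\<le>N. smult (c n) (Q n)) m \<noteq> 0" by (rule coeff_top[OF deg nz m(1) m(4) m(3)])
  then show False unfolding s by simp
qed

lemma repr_unique:
  fixes Q :: "nat \<Rightarrow> complex poly"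
  assumes deg: "\<And>n. degree (Q n) = n" and nz: "\<And>n. Q n \<noteq> 0"
    and P: "P = (\<Sum>n\<le>N. smult (c n) (Q n))" and z: "\<forall>n>N. c n = 0"
  shows "poly_coords Q P = c"
proof -
  have cz: "\<forall>n > degree P. c n = 0"
  proof (intro allI impI, rule ccontr)
    fix n assume "degree P < n" "c n \<noteq> 0"
    then have "n \<le> N" using z by (meson not_le)
    obtain m where m: "c m \<noteq> 0" "n \<le> m" "m \<le> N" "\<forall>k. m < k \<and> k \<le> N \<longrightarrow> c k = 0"
      using max_nz[of c n N] \<open>c n \<noteq> 0\<close> \<open>n \<le> N\<close> by blast
    have "coeff P m \<noteq> 0" unfolding P by (rule coeff_top[OF deg nz m(1) m(4) m(3)])
    moreover have "degree P < m" using m \<open>degree P < n\<close> by simp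
    ultimately show False by (simp add: coeff_eq_0)
  qed
  let ?M = "max N (degree P)"
  have e1: "(\<Sum>n\<le>N. smult (c n) (Q n)) = (\<Sum>n\<le>?M. smult (c n) (Q n))"
    by (rule sum.mono_neutral_left) (auto simp: z)
  have e2: "(\<Sum>n\<le>degree P. smult (c n) (Q n)) = (\<Sum>n\<le>?M. smult (c n) (Q n))"
    by (rule sum.mono_neutral_left) (auto simp: cz)
  have rep: "P = (\<Sum>n\<le>degree P. smult (c n) (Q n))" using P e1 e2 by simp
  show ?thesis unfolding poly_coords_def
  proof (rule the_equality)
    show "(\<forall>n>degree P. c n = 0) \<and> P = (\<Sum>n\<le>degree P. smult (c n) (Q n))" using cz rep by simp
  next
    fix c' assume H: "(\<forall>n>degree P. c' n = 0) \<and> P = (\<Sum>n\<le>degree P. smult (c' n) (Q n))"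
    have "(\<Sum>n\<le>degree P. smult (c' n - c n) (Q n)) = 0"
      using H rep by (simp add: smult_diff_left sum_subtractf)
    note sz = this
    have "\<forall>n\<le>degree P. c' n - c n = 0"
    proof (intro allI impI)
      fix n assume "n \<le> degree P"
      from indep[OF deg nz sz this] show "c' n - c n = 0" .
    qed
    show "c' = c"
    proof
      fix n show "c' n = c n"
      proof (cases "n \<le> degree P")
        case True then show ?thesis using \<open>\<forall>n\<le>degree P. c' n - c n = 0\<close> by simp
      next
        case False then show ?thesis using H cz by simp
      qed
    qed
  qed
qed

lemma ex_repr_aux:
  fixes Q :: "nat \<Rightarrow> complex poly"
  assumes deg: "\<And>n. degree (Q n) = n" and nz: "\<And>n. Q n \<noteq> 0"
  shows "\<forall>P. (\<forall>k\<ge>N. coeff P k = 0) \<longrightarrow> (\<exists>c. (\<forall>n\<ge>N. c n = 0) \<and> P = (\<Sum>n<N. smult (c n) (Q n)))"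
proof (induction N)
  case 0
  show ?case
  proof (intro allI impI)
    fix P :: "complex poly" assume "\<forall>k\<ge>0. coeff P k = 0"
    then have "P = 0" by (simp add: poly_eqI)
    then show "\<exists>c. (\<forall>n\<ge>0. c n = 0) \<and> P = (\<Sum>n<0. smult (c n) (Q n))" by (intro exI[of _ "\<lambda>_. 0"]) simp
  qed
next
  case (Suc N)
  show ?case
  proof (intro allI impI)
    fix P :: "complex poly" assume H: "\<forall>k\<ge>Suc N. coeff P k = 0"
    define a where "a = coeff P N / lead_coeff (Q N)"
    have lnz: "lead_coeff (Q N) \<noteq> 0" using nz by simp
    define P' where "P' = P - smult a (Q N)"
    have "\<forall>k\<ge>N. coeff P' k = 0"
    proof (intro allI impI)
      fix k assume "N \<le> k"
      show "coeff P' k = 0"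
      proof (cases "k = N")
        case True then show ?thesis using lnz deg[of N] by (simp add: P'_def a_def)
      next
        case False then have "k > N" using \<open>N \<le> k\<close> by simp
        then show ?thesis using H deg[of N] by (simp add: P'_def coeff_eq_0)
      qed
    qed
    then obtain c where c: "\<forall>n\<ge>N. c n = 0" "P' = (\<Sum>n<N. smult (c n) (Q n))" using Suc.IH by blast
    define c' where "c' = c(N := a)"
    have "(\<Sum>n<N. smult (c n) (Q n)) = (\<Sum>n<N. smult (c' n) (Q n))" by (rule sum.cong) (auto simp: c'_def)
    have "P = P' + smult a (Q N)" by (simp add: P'_def)
    also have "\<dots> = (\<Sum>n<N. smult (c' n) (Q n)) + smult (c' N) (Q N)"
    proof -
      have "c' N = a" by (simp add: c'_def)
      then show ?thesis unfolding c(2) \<open>(\<Sum>n<N. smult (c n) (Q n)) = (\<Sum>n<N. smult (c' n) (Q n))\<close> by simp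
    qed
    also have "\<dots> = (\<Sum>n<Suc N. smult (c' n) (Q n))" by simp
    finally have "P = (\<Sum>n<Suc N. smult (c' n) (Q n))" .
    moreover have "\<forall>n\<ge>Suc N. c' n = 0" using c(1) by (simp add: c'_def)
    ultimately show "\<exists>c. (\<forall>n\<ge>Suc N. c n = 0) \<and> P = (\<Sum>n<Suc N. smult (c n) (Q n))" by blast
  qed
qed

lemma coords_spec:
  fixes Q :: "nat \<Rightarrow> complex poly"
  assumes deg: "\<And>n. degree (Q n) = n" and nz: "\<And>n. Q n \<noteq> 0"
  shows "(\<forall>n > degree P. poly_coords Q P n = 0) \<and> P = (\<Sum>n\<le>degree P. smult (poly_coords Q P n) (Q n))"
proof -
  have "\<forall>k\<ge>Suc (degree P). coeff P k = 0" by (simp add: coeff_eq_0)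
  then obtain c where c: "\<forall>n\<ge>Suc (degree P). c n = 0" "P = (\<Sum>n<Suc (degree P). smult (c n) (Q n))"
    using ex_repr_aux[OF deg nz] by blast
  have P: "P = (\<Sum>n\<le>degree P. smult (c n) (Q n))" using c(2) lessThan_Suc_atMost by simp
  have cz: "\<forall>n>degree P. c n = 0" using c(1) by (auto simp: Suc_le_eq)
  have h: "poly_coords Q P = c" by (rule repr_unique[OF deg nz P cz])
  show ?thesis unfolding h using cz P by (intro conjI)
qed

lemma coeff_laguerre:
  "coeff (laguerre \<beta> n) i = (if i \<le> n then complex_of_real ((-1) ^ i / fact i * ((real n + \<beta>) gchoose (n - i))) else 0)"
  unfolding laguerre_def by (simp add: coeff_sum coeff_monom)

lemma laguerre_top: "coeff (laguerre \<beta> n) n \<noteq> 0"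
  by (simp add: coeff_laguerre)

lemma degree_laguerre: "degree (laguerre \<beta> n) = n"
proof (rule antisym)
  show "degree (laguerre \<beta> n) \<le> n" by (rule degree_le) (simp add: coeff_laguerre)
  show "n \<le> degree (laguerre \<beta> n)" by (rule le_degree) (rule laguerre_top)
qed

lemma laguerre_nz: "laguerre \<beta> n \<noteq> 0"
  using laguerre_top by (metis coeff_0)

lemma laguerre_0: "laguerre \<alpha> 0 = laguerre (\<alpha> + 1) 0"
  by (rule poly_eqI) (simp add: coeff_laguerre)

lemma laguerre_Suc: "laguerre \<alpha> (Suc n) = laguerre (\<alpha> + 1) (Suc n) - laguerre (\<alpha> + 1) n"
proof (rule poly_eqI)
  fix i
  show "coeff (laguerre \<alpha> (Suc n)) i = coeff (laguerre (\<alpha> + 1) (Suc n) - laguerre (\<alpha> + 1) n) i"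
  proof (cases "i \<le> n")
    case True
    have sub: "Suc n - i = Suc (n - i)" using True by simp
    have g: "((real (Suc n) + (\<alpha> + 1)) gchoose Suc (n - i)) =
          ((real (Suc n) + \<alpha>) gchoose (n - i)) + ((real (Suc n) + \<alpha>) gchoose Suc (n - i))"
      using gbinomial_Suc_Suc[of "real (Suc n) + \<alpha>" "n - i"] by (simp add: algebra_simps)
    have e: "real n + (\<alpha> + 1) = real (Suc n) + \<alpha>" by simp
    have "(-1) ^ i / fact i * ((real (Suc n) + \<alpha>) gchoose (Suc n - i)) =
       (-1) ^ i / fact i * ((real (Suc n) + (\<alpha> + 1)) gchoose (Suc n - i)) -
       (-1) ^ i / fact i * ((real n + (\<alpha> + 1)) gchoose (n - i))"
      unfolding sub g e by (simp add: algebra_simps)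
    then have "complex_of_real ((-1) ^ i / fact i * ((real (Suc n) + \<alpha>) gchoose (Suc n - i))) =
       complex_of_real ((-1) ^ i / fact i * ((real (Suc n) + (\<alpha> + 1)) gchoose (Suc n - i))) -
       complex_of_real ((-1) ^ i / fact i * ((real n + (\<alpha> + 1)) gchoose (n - i)))"
      by (metis of_real_diff)
    then show ?thesis using True by (simp add: coeff_laguerre del: of_real_mult of_real_divide of_real_power)
  next
    case False
    then show ?thesis by (cases "i = Suc n") (auto simp: coeff_laguerre)
  qed
qed

lemma shift_sum:
  fixes Q Pb :: "nat \<Rightarrow> complex poly"
  assumes Q0: "Q 0 = Pb 0" and QS: "\<And>n. Q (Suc n) = Pb (Suc n) - Pb n"
  shows "(\<Sum>n\<le>D. smult (c n) (Q n)) = (\<Sum>n\<le>D. smult (c n - c (Suc n)) (Pb n)) + smult (c (Suc D)) (Pb D)"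
proof (induction D)
  case 0
  show ?case by (simp add: Q0 smult_diff_left)
next
  case (Suc D)
  have "(\<Sum>n\<le>Suc D. smult (c n) (Q n)) = (\<Sum>n\<le>D. smult (c n) (Q n)) + smult (c (Suc D)) (Q (Suc D))"
    by simp
  also have "\<dots> = (\<Sum>n\<le>D. smult (c n - c (Suc n)) (Pb n)) + smult (c (Suc D)) (Pb D)
      + smult (c (Suc D)) (Pb (Suc D) - Pb D)" using Suc.IH QS by simp
  also have "\<dots> = (\<Sum>n\<le>Suc D. smult (c n - c (Suc n)) (Pb n)) + smult (c (Suc (Suc D))) (Pb (Suc D))"
    by (simp add: smult_diff_left smult_diff_right algebra_simps)
  finally show ?case .
qed

lemma Pb_sum:
  fixes Q Pb :: "nat \<Rightarrow> complex poly"
  assumes Q0: "Q 0 = Pb 0" and QS: "\<And>n. Q (Suc n) = Pb (Suc n) - Pb n"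
  shows "Pb n = (\<Sum>k\<le>n. Q k)"
  by (induction n) (simp_all add: Q0 QS)

lemma smult_sum_right: "smult a (sum f S) = (\<Sum>k\<in>S. smult a (f k))"
  by (induction S rule: infinite_finite_induct) (simp_all add: smult_add_right)

lemma swap_sum:
  fixes Q :: "nat \<Rightarrow> complex poly"
  shows "(\<Sum>n\<le>D. smult (a n) (\<Sum>k\<le>n. Q k)) = (\<Sum>k\<le>D. smult (\<Sum>n\<in>{k..D}. a n) (Q k))"
proof (induction D)
  case 0
  show ?case by simp
next
  case (Suc D)
  have "(\<Sum>n\<le>Suc D. smult (a n) (\<Sum>k\<le>n. Q k)) =
        (\<Sum>k\<le>D. smult (\<Sum>n\<in>{k..D}. a n) (Q k)) + (\<Sum>k\<le>Suc D. smult (a (Suc D)) (Q k))"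
    using Suc.IH by (simp add: smult_sum_right)
  also have "\<dots> = (\<Sum>k\<le>Suc D. smult (\<Sum>n\<in>{k..D}. a n) (Q k)) + (\<Sum>k\<le>Suc D. smult (a (Suc D)) (Q k))"
    by simp
  also have "\<dots> = (\<Sum>k\<le>Suc D. smult (\<Sum>n\<in>{k..D}. a n) (Q k) + smult (a (Suc D)) (Q k))"
    by (simp add: sum.distrib)
  also have "\<dots> = (\<Sum>k\<le>Suc D. smult (\<Sum>n\<in>{k..Suc D}. a n) (Q k))"
  proof (rule sum.cong)
    fix k assume "k \<in> {..Suc D}"
    then have "(\<Sum>n\<in>{k..Suc D}. a n) = (\<Sum>n\<in>{k..D}. a n) + a (Suc D)" by simp
    then show "smult (\<Sum>n\<in>{k..D}. a n) (Q k) + smult (a (Suc D)) (Q k) = smult (\<Sum>n\<in>{k..Suc D}. a n) (Q k)"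
      by (simp add: smult_add_left)
  qed simp
  finally show ?case .
qed

lemma tele:
  fixes c d :: "nat \<Rightarrow> complex"
  shows "(\<Sum>n<k. d n * (c n - c (Suc n))) = c 0 * d 0 - c k * d k + (\<Sum>u=1..k. c u * (d u - d (u - 1)))"
proof (induction k)
  case 0 show ?case by simp
next
  case (Suc k)
  show ?case using Suc.IH by (simp add: algebra_simps)
qed

lemma E_identity:
  fixes Q Pb :: "nat \<Rightarrow> complex poly" and d :: "nat \<Rightarrow> complex"
  assumes degQ: "\<And>n. degree (Q n) = n" and nzQ: "\<And>n. Q n \<noteq> 0"
    and degPb: "\<And>n. degree (Pb n) = n" and nzPb: "\<And>n. Pb n \<noteq> 0"
    and Q0: "Q 0 = Pb 0" and QS: "\<And>n. Q (Suc n) = Pb (Suc n) - Pb n"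
  shows "poly_coords Q (E_op Pb d P) k = poly_coords Q (E_op Pb d P) 0 - poly_coords Q P 0 * d 0
     + poly_coords Q P k * d k - (\<Sum>u=1..k. poly_coords Q P u * (d u - d (u - 1)))"
proof -
  define c where "c = poly_coords Q P"
  define D where "D = degree P"
  have cz: "\<forall>n>D. c n = 0" and rep: "P = (\<Sum>n\<le>D. smult (c n) (Q n))"
    using coords_spec[OF degQ nzQ, of P] unfolding c_def D_def by auto
  have P2: "P = (\<Sum>n\<le>D. smult (c n - c (Suc n)) (Pb n))"
    using rep shift_sum[OF Q0 QS, of c D] cz by simp
  have pc: "poly_coords Pb P = (\<lambda>n. c n - c (Suc n))"
    by (rule repr_unique[OF degPb nzPb P2]) (simp add: cz)
  define a where "a n = d n * (c n - c (Suc n))" for n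
  have az: "\<forall>n>D. a n = 0" using cz by (simp add: a_def)
  define e where "e k = (\<Sum>n\<in>{k..D}. a n)" for k
  have "E_op Pb d P = (\<Sum>n\<le>D. smult (a n) (Pb n))"
    unfolding E_op_def pc a_def D_def by simp
  also have "\<dots> = (\<Sum>n\<le>D. smult (a n) (\<Sum>k\<le>n. Q k))"
    using Pb_sum[OF Q0 QS] by simp
  also have "\<dots> = (\<Sum>k\<le>D. smult (e k) (Q k))" unfolding e_def by (rule swap_sum)
  finally have EP: "E_op Pb d P = (\<Sum>k\<le>D. smult (e k) (Q k))" .
  have ez: "\<forall>n>D. e n = 0" by (simp add: e_def)
  have pe: "poly_coords Q (E_op Pb d P) = e" by (rule repr_unique[OF degQ nzQ EP ez])
  have key: "e 0 = (\<Sum>n<j. a n) + e j" for j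
  proof (induction j)
    case 0 show ?case by simp
  next
    case (Suc j)
    have "e j = a j + e (Suc j)"
    proof (cases "j \<le> D")
      case True then show ?thesis unfolding e_def by (simp add: sum.atLeast_Suc_atMost)
    next
      case False then show ?thesis using az by (simp add: e_def)
    qed
    then show ?case using Suc.IH by simp
  qed
  have "e k = e 0 - (\<Sum>n<k. a n)" using key[of k] by simp
  also have "\<dots> = e 0 - (c 0 * d 0 - c k * d k + (\<Sum>u=1..k. c u * (d u - d (u - 1))))"
    unfolding a_def tele ..
  finally show ?thesis unfolding pe c_def[symmetric] by (simp add: algebra_simps)
qed

lemma coord_le:
  fixes f c :: "nat \<Rightarrow> complex"
  assumes "ell2 f" "\<forall>n>N. c n = 0"
  shows "cmod (f k - c k) \<le> sqrt (\<Sum>k. (cmod (f k - c k))\<^sup>2)"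
proof -
  have ev: "eventually (\<lambda>n. (cmod (f n - c n))\<^sup>2 = (cmod (f n))\<^sup>2) sequentially"
    using assms(2) by (auto simp: eventually_sequentially intro!: exI[of _ "Suc N"])
  have s: "summable (\<lambda>n. (cmod (f n - c n))\<^sup>2)"
    using summable_cong[OF ev] assms(1) by (simp add: ell2_def)
  have "sum (\<lambda>n. (cmod (f n - c n))\<^sup>2) {k} \<le> (\<Sum>k. (cmod (f k - c k))\<^sup>2)"
    by (rule sum_le_suminf[OF s]) auto
  then show ?thesis by (intro real_le_rsqrt) simp
qed

lemma coords_conv:
  fixes Q :: "nat \<Rightarrow> complex poly" and R :: "nat \<Rightarrow> complex poly"
  assumes degQ: "\<And>n. degree (Q n) = n" and nzQ: "\<And>n. Q n \<noteq> 0"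
    and f: "ell2 f" and lim: "(\<lambda>j. dist_H Q f (R j)) \<longlonglongrightarrow> 0"
  shows "(\<lambda>j. poly_coords Q (R j) k) \<longlonglongrightarrow> f k"
proof -
  have b: "norm (f k - poly_coords Q (R j) k) \<le> dist_H Q f (R j)" for j
  proof -
    have "\<forall>n>degree (R j). poly_coords Q (R j) n = 0" using coords_spec[OF degQ nzQ] by blast
    then show ?thesis unfolding dist_H_def by (rule coord_le[OF f])
  qed
  have "(\<lambda>j. f k - poly_coords Q (R j) k) \<longlonglongrightarrow> 0"
    by (rule Lim_null_comparison[OF _ lim]) (simp add: b)
  then have "(\<lambda>j. f k - (f k - poly_coords Q (R j) k)) \<longlonglongrightarrow> f k - 0"
    by (intro tendsto_diff tendsto_const)
  then show ?thesis by simp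
qed

lemma ell2_zero:
  assumes "ell2 f" shows "f \<longlonglongrightarrow> 0"
proof -
  have "(\<lambda>k. (cmod (f k))\<^sup>2) \<longlonglongrightarrow> 0" using assms unfolding ell2_def by (rule summable_LIMSEQ_zero)
  then have "(\<lambda>k. sqrt ((cmod (f k))\<^sup>2)) \<longlonglongrightarrow> sqrt 0" by (rule tendsto_real_sqrt)
  then have "(\<lambda>k. cmod (f k)) \<longlonglongrightarrow> 0" by simp
  then show ?thesis by (rule tendsto_norm_zero_cancel)
qed

lemma part_a:
  fixes d f g :: "nat \<Rightarrow> complex"
  assumes f: "ell2 f" and g: "ell2 g" and jump: "\<exists>u\<ge>1. d u \<noteq> d (u - 1)"
    and b: "\<forall>k\<ge>1. g k = g 0 - f 0 * d 0 + f k * d k - (\<Sum>u=1..k. f u * (d u - d (u - 1)))"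
  shows "\<exists>h :: nat \<Rightarrow> nat \<Rightarrow> complex.
            (\<forall>n u. u > n \<longrightarrow> h n u = 0) \<and>
            (\<forall>u. (\<lambda>n. h n u) \<longlonglongrightarrow> f u) \<and>
            (\<lambda>n. h n n * d n) \<longlonglongrightarrow> 0 \<and>
            (\<lambda>n. \<Sum>u=1..n. h n u * (d u - d (u - 1))) \<longlonglongrightarrow> g 0 - f 0 * d 0"
proof -
  define C where "C = g 0 - f 0 * d 0"
  define S where "S n = (\<Sum>u=1..n. f u * (d u - d (u - 1)))" for n
  define J where "J n = {u. 1 \<le> u \<and> u < n \<and> d u \<noteq> d (u - 1)}" for n
  define h where "h n u = (if u < n then f u else 0) +
     (if J n \<noteq> {} \<and> u = Max (J n) then (C - S (n - 1)) / (d u - d (u - 1)) else 0)" for n u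
  have finJ: "finite (J n)" for n by (rule finite_subset[of _ "{..<n}"]) (auto simp: J_def)
  have MJ: "J n \<noteq> {} \<Longrightarrow> Max (J n) \<in> J n" for n using finJ by (rule Max_in)
  have MJ': "J n \<noteq> {} \<Longrightarrow> 1 \<le> Max (J n) \<and> Max (J n) < n \<and> d (Max (J n)) \<noteq> d (Max (J n) - 1)" for n
    using MJ[of n] by (simp add: J_def)
  have a1: "\<forall>n u. u > n \<longrightarrow> h n u = 0"
  proof (intro allI impI)
    fix n u :: nat assume "u > n"
    have "\<not> (J n \<noteq> {} \<and> u = Max (J n))"
    proof
      assume H: "J n \<noteq> {} \<and> u = Max (J n)"
      then have "Max (J n) < n" using MJ'[of n] by blast
      then show False using H \<open>u > n\<close> by simp
    qed
    then have e: "(if J n \<noteq> {} \<and> u = Max (J n) then (C - S (n - 1)) / (d u - d (u - 1)) else 0) = 0"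
      by (rule if_not_P)
    show "h n u = 0" unfolding h_def e using \<open>u > n\<close> by simp
  qed
  have hnn: "h n n = 0" for n
  proof -
    have "\<not> (J n \<noteq> {} \<and> n = Max (J n))"
    proof
      assume H: "J n \<noteq> {} \<and> n = Max (J n)"
      then have "Max (J n) < n" using MJ'[of n] by blast
      then show False using H by simp
    qed
    then have e: "(if J n \<noteq> {} \<and> n = Max (J n) then (C - S (n - 1)) / (d n - d (n - 1)) else 0) = 0"
      by (rule if_not_P)
    show ?thesis unfolding h_def e by simp
  qed
  have a3: "(\<lambda>n. h n n * d n) \<longlonglongrightarrow> 0" by (simp add: hnn)
  obtain u0 where u0: "u0 \<ge> 1" "d u0 \<noteq> d (u0 - 1)" using jump by blast
  have a4: "(\<lambda>n. \<Sum>u=1..n. h n u * (d u - d (u - 1))) \<longlonglongrightarrow> C"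
  proof (rule tendsto_eventually)
    show "eventually (\<lambda>n. (\<Sum>u=1..n. h n u * (d u - d (u - 1))) = C) sequentially"
      unfolding eventually_sequentially
    proof (intro exI[of _ "Suc u0"] allI impI)
      fix n :: nat assume n: "Suc u0 \<le> n"
      then have "u0 \<in> J n" using u0 by (simp add: J_def)
      then have ne: "J n \<noteq> {}" by blast
      define m where "m = Max (J n)"
      have m: "1 \<le> m" "m < n" "d m \<noteq> d (m - 1)" using MJ'[OF ne] by (auto simp: m_def)
      obtain n' where n': "n = Suc n'" using n by (cases n) auto
      have s1: "(\<Sum>u=1..n. (if u < n then f u else 0) * (d u - d (u - 1))) = S (n - 1)"
        unfolding n' S_def by (simp add: sum.cl_ivl_Suc)
      have s2: "(\<Sum>u=1..n. (if u = m then (C - S (n - 1)) / (d u - d (u - 1)) else 0) * (d u - d (u - 1)))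
          = C - S (n - 1)"
      proof -
        have "(\<Sum>u=1..n. (if u = m then (C - S (n - 1)) / (d u - d (u - 1)) else 0) * (d u - d (u - 1)))
           = (\<Sum>u\<in>{1..n}. if u = m then (C - S (n - 1)) / (d m - d (m - 1)) * (d m - d (m - 1)) else 0)"
          by (rule sum.cong) auto
        also have "\<dots> = (C - S (n - 1)) / (d m - d (m - 1)) * (d m - d (m - 1))"
          using m by simp
        also have "\<dots> = C - S (n - 1)" using m by simp
        finally show ?thesis .
      qed
      have "(\<Sum>u=1..n. h n u * (d u - d (u - 1))) =
         (\<Sum>u=1..n. (if u < n then f u else 0) * (d u - d (u - 1))) +
         (\<Sum>u=1..n. (if u = m then (C - S (n - 1)) / (d u - d (u - 1)) else 0) * (d u - d (u - 1)))"
        unfolding sum.distrib[symmetric] h_def m_def using ne by (simp add: distrib_right)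
      then show "(\<Sum>u=1..n. h n u * (d u - d (u - 1))) = C" using s1 s2 by simp
    qed
  qed
  have a2: "(\<lambda>n. h n u) \<longlonglongrightarrow> f u" for u
  proof (cases "\<forall>M. \<exists>v>M. d v \<noteq> d (v - 1)")
    case True
    then obtain v where v: "v > u" "d v \<noteq> d (v - 1)" by blast
    show ?thesis
    proof (rule tendsto_eventually, unfold eventually_sequentially, intro exI[of _ "Suc v"] allI impI)
      fix n :: nat assume n: "Suc v \<le> n"
      have vJ: "v \<in> J n" using v n by (auto simp: J_def)
      then have "v \<le> Max (J n)" using finJ by simp
      then show "h n u = f u" using v n by (auto simp: h_def)
    qed
  next
    case False
    then obtain M where M: "\<forall>v>M. d v = d (v - 1)" by blast
    have dM: "d v = d M" if "v \<ge> M" for v using that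
    proof (induction v rule: dec_induct)
      case (step v) then show ?case using M[rule_format, of "Suc v"] by simp
    qed simp
    have SM: "S n = S M" if "n \<ge> M" for n using that
    proof (induction n rule: dec_induct)
      case (step n) then show ?case using M[rule_format, of "Suc n"] by (simp add: S_def)
    qed simp
    have ev: "eventually (\<lambda>k. g k - f k * d M = C - S M) sequentially"
      unfolding eventually_sequentially
    proof (intro exI[of _ "Suc M"] allI impI)
      fix k :: nat assume k: "Suc M \<le> k"
      then have "g k = C + f k * d k - S k" using b by (simp add: C_def S_def)
      then show "g k - f k * d M = C - S M" using dM[of k] SM[of k] k by simp
    qed
    have "(\<lambda>k. g k - f k * d M) \<longlonglongrightarrow> 0 - 0 * d M"
      by (intro tendsto_intros ell2_zero f g)
    then have "(\<lambda>k. C - S M) \<longlonglongrightarrow> 0" using ev by (simp add: Lim_transform_eventually)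
    then have CS: "C = S M" by (simp add: LIMSEQ_const_iff)
    show ?thesis
    proof (rule tendsto_eventually, unfold eventually_sequentially, intro exI[of _ "Suc (max u M)"] allI impI)
      fix n :: nat assume n: "Suc (max u M) \<le> n"
      then have "S (n - 1) = S M" by (intro SM) simp
      moreover have "u < n" using n by simp
      ultimately show "h n u = f u" using CS by (simp add: h_def)
    qed
  qed
  show ?thesis using a1 a2 a3 a4 unfolding C_def by blast
qed

theorem theorem6:
  fixes \<alpha> :: real and d f g :: "nat \<Rightarrow> complex"
  assumes "\<alpha> > -1"
    and "d \<in> D_tilde"
    and "ell2 f" and "ell2 g"
    and "in_graph_closure (laguerre \<alpha>) (E_op (laguerre (\<alpha> + 1)) d) f g"
  shows "(\<exists>h :: nat \<Rightarrow> nat \<Rightarrow> complex.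
            (\<forall>n u. u > n \<longrightarrow> h n u = 0) \<and>
            (\<forall>u. (\<lambda>n. h n u) \<longlonglongrightarrow> f u) \<and>
            (\<lambda>n. h n n * d n) \<longlonglongrightarrow> 0 \<and>
            (\<lambda>n. \<Sum>u=1..n. h n u * (d u - d (u - 1))) \<longlonglongrightarrow> g 0 - f 0 * d 0)
         \<and> (\<forall>k\<ge>1. g k = g 0 - f 0 * d 0 + f k * d k - (\<Sum>u=1..k. f u * (d u - d (u - 1))))"
proof -
  let ?q = "laguerre \<alpha>" and ?p = "laguerre (\<alpha> + 1)"
  obtain P where P1: "(\<lambda>j. dist_H ?q f (P j)) \<longlonglongrightarrow> 0"
    and P2: "(\<lambda>j. dist_H ?q g (E_op ?p d (P j))) \<longlonglongrightarrow> 0"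
    using assms(5) unfolding in_graph_closure_def by blast
  have cf: "(\<lambda>j. poly_coords ?q (P j) k) \<longlonglongrightarrow> f k" for k
    by (rule coords_conv[OF degree_laguerre laguerre_nz assms(3) P1])
  have cg: "(\<lambda>j. poly_coords ?q (E_op ?p d (P j)) k) \<longlonglongrightarrow> g k" for k
    by (rule coords_conv[OF degree_laguerre laguerre_nz assms(4) P2])
  have b: "\<forall>k\<ge>1. g k = g 0 - f 0 * d 0 + f k * d k - (\<Sum>u=1..k. f u * (d u - d (u - 1)))"
  proof (intro allI impI)
    fix k :: nat assume "k \<ge> 1"
    have id: "poly_coords ?q (E_op ?p d (P j)) k = poly_coords ?q (E_op ?p d (P j)) 0 - poly_coords ?q (P j) 0 * d 0
     + poly_coords ?q (P j) k * d k - (\<Sum>u=1..k. poly_coords ?q (P j) u * (d u - d (u - 1)))" for j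
      by (rule E_identity[OF degree_laguerre laguerre_nz degree_laguerre laguerre_nz laguerre_0 laguerre_Suc])
    have "(\<lambda>j. poly_coords ?q (E_op ?p d (P j)) 0 - poly_coords ?q (P j) 0 * d 0
     + poly_coords ?q (P j) k * d k - (\<Sum>u=1..k. poly_coords ?q (P j) u * (d u - d (u - 1))))
      \<longlonglongrightarrow> g 0 - f 0 * d 0 + f k * d k - (\<Sum>u=1..k. f u * (d u - d (u - 1)))"
      by (intro tendsto_intros cf cg)
    then have "(\<lambda>j. poly_coords ?q (E_op ?p d (P j)) k)
      \<longlonglongrightarrow> g 0 - f 0 * d 0 + f k * d k - (\<Sum>u=1..k. f u * (d u - d (u - 1)))"
      unfolding id[symmetric] .
    then show "g k = g 0 - f 0 * d 0 + f k * d k - (\<Sum>u=1..k. f u * (d u - d (u - 1)))"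
      using cg[of k] by (rule LIMSEQ_unique[rotated])
  qed
  have jump: "\<exists>u\<ge>1. d u \<noteq> d (u - 1)"
  proof (rule ccontr)
    assume "\<not> (\<exists>u\<ge>1. d u \<noteq> d (u - 1))"
    then have H: "\<forall>u\<ge>1. d u = d (u - 1)" by blast
    have c0: "d u = d 0" for u
    proof (induction u)
      case (Suc u) then show ?case using H[rule_format, of "Suc u"] by simp
    qed simp
    obtain m n where "d m \<noteq> d n" using assms(2) unfolding D_tilde_def by blast
    then show False using c0[of m] c0[of n] by simp
  qed
  show ?thesis using part_a[OF assms(3) assms(4) jump b] b by blast
qed

end
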